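(* Let $(X,\leqslant)$ be a finite partially ordered set, $U$ a finite set of users and $\lambda\colon U\to X$. Then for any directed path $x_1x_2\dots x_p$ with $p>2$ in $H^*=(X,E_0^* )$ (that is, $x_1>x_2>\dots>x_p$), we have \[ \omega(x_1x_p)\geqslant\sum_{i=1}^{p-1}\omega(x_ix_{i+1}). \]
   Context: $E_0^*=\{xy:x,y\in X,\ x>y\}$. $U(x)=\{u\in U:\lambda(u)=x\}$; for $yz\in E_0^*$, $\gamma(yz)=\{x\in X:x\geqslant z,\ x\not\geqslant y\}$ and $\omega(yz)=\sum_{x\in\gamma(yz)}|U(x)|$. *)

theory Defs
  imports Main
begin

definition users_at :: "'u set \<Rightarrow> ('u \<Rightarrow> 'a) \<Rightarrow> 'a \<Rightarrow> 'u set" where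
  "users_at U lam x = {u \<in> U. lam u = x}"

definition gamma :: "'a::order set \<Rightarrow> 'a \<Rightarrow> 'a \<Rightarrow> 'a set" where
  "gamma X y z = {x \<in> X. x \<ge> z \<and> \<not> x \<ge> y}"

definition omega :: "'a::order set \<Rightarrow> 'u set \<Rightarrow> ('u \<Rightarrow> 'a) \<Rightarrow> 'a \<Rightarrow> 'a \<Rightarrow> nat" where
  "omega X U lam y z = (\<Sum>x\<in>gamma X y z. card (users_at U lam x))"

end

theory Submission
  imports Defs
begin

lemma chain_le:
  fixes xs :: "'a::order list"
  assumes "\<forall>i < p - 1. xs ! i > xs ! (i + 1)"
  shows "i \<le> j \<Longrightarrow> j < p \<Longrightarrow> xs ! j \<le> xs ! i"
proof (induction j)
  case 0 then show ?case by simp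
next
  case (Suc j)
  show ?case
  proof (cases "i = Suc j")
    case True then show ?thesis by simp
  next
    case False
    then have "xs ! j \<le> xs ! i" using Suc by simp
    moreover have "xs ! Suc j < xs ! j" using assms Suc.prems by auto
    ultimately show ?thesis by simp
  qed
qed

theorem corollary3:
  fixes X :: "'a::order set" and U :: "'u set" and lam :: "'u \<Rightarrow> 'a"
    and xs :: "'a list" and p :: nat
  assumes "finite X" and "finite U" and "\<forall>u\<in>U. lam u \<in> X"
    and "length xs = p" and "p > 2" and "set xs \<subseteq> X"
    and "\<forall>i < p - 1. xs ! i > xs ! (i + 1)"
  shows "omega X U lam (xs ! 0) (xs ! (p - 1))
           \<ge> (\<Sum>i < p - 1. omega X U lam (xs ! i) (xs ! (i + 1)))"
proof -
  note ch = chain_le[OF assms(7)]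
  let ?f = "\<lambda>x. card (users_at U lam x)"
  let ?G = "\<lambda>i. gamma X (xs ! i) (xs ! (i + 1))"
  have fin: "\<forall>i\<in>{..<p-1}. finite (?G i)" using assms(1) by (simp add: gamma_def)
  have disj: "\<forall>i\<in>{..<p-1}. \<forall>j\<in>{..<p-1}. i \<noteq> j \<longrightarrow> ?G i \<inter> ?G j = {}"
  proof (intro ballI impI)
    fix i j assume i: "i \<in> {..<p-1}" and j: "j \<in> {..<p-1}" and ij: "i \<noteq> j"
    have key: "?G a \<inter> ?G b = {}" if "a < b" "b < p - 1" for a b
    proof -
      have "xs ! b \<le> xs ! (a+1)" using ch[of "a+1" b] that by simp
      then show ?thesis unfolding gamma_def using order_trans by blast
    qed
    show "?G i \<inter> ?G j = {}"
    proof (cases "i < j")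
      case True then show ?thesis using key j by simp
    next
      case False then have "j < i" using ij by simp
      then show ?thesis using key[of j i] i by blast
    qed
  qed
  have sub: "(\<Union>i\<in>{..<p-1}. ?G i) \<subseteq> gamma X (xs ! 0) (xs ! (p - 1))"
  proof
    fix x assume "x \<in> (\<Union>i\<in>{..<p-1}. ?G i)"
    then obtain i where i: "i < p - 1" and x: "x \<in> ?G i" by auto
    have a: "xs ! (p-1) \<le> xs ! (i+1)" using ch[of "i+1" "p-1"] i by simp
    have b: "xs ! i \<le> xs ! 0" using ch[of 0 i] i by simp
    show "x \<in> gamma X (xs ! 0) (xs ! (p - 1))"
      using x a b unfolding gamma_def using order_trans by blast
  qed
  have "(\<Sum>i < p - 1. omega X U lam (xs ! i) (xs ! (i + 1)))
      = (\<Sum>i < p - 1. sum ?f (?G i))" by (simp add: omega_def)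
  also have "\<dots> = sum ?f (\<Union>i\<in>{..<p-1}. ?G i)"
    using sum.UNION_disjoint[of "{..<p-1}" ?G ?f] fin disj by simp
  also have "\<dots> \<le> sum ?f (gamma X (xs ! 0) (xs ! (p - 1)))"
    by (rule sum_mono2) (use sub assms(1) in \<open>auto simp: gamma_def\<close>)
  also have "\<dots> = omega X U lam (xs ! 0) (xs ! (p - 1))" by (simp add: omega_def)
  finally show ?thesis .
qed

end
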